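(* Let $\zeta_5=\exp(2\pi i/5)$, $K=\mathbb{Q}(\zeta_5)\subset\mathbb{C}$, $\mathcal{O}_K=\mathbb{Z}[\zeta_5]$, let $\sigma:K\to\mathbb{C}$ be the embedding with $\sigma(\zeta_5)=\zeta_5^2$, and let $\mathcal{S}=\{z\in\mathcal{O}_K : |\sigma(z)|\le 1\}$. If $z_1,z_2\in\mathcal{S}$ with $z_1\neq z_2$ and $|z_1-z_2|<\frac{\sqrt5}{2}$, then $z_1-z_2$ is a unit of $\mathcal{O}_K$.
   Context: Elements of $K$ are regarded as complex numbers via the inclusion $K\subset\mathbb{C}$. *)

theory Defs
  imports Complex_Main
begin

definition zeta5 :: complex where
  "zeta5 = exp (2 * of_real pi * \<i> / 5)"

definition OK5 :: "complex set" where
  "OK5 = {z. \<exists>a::nat \<Rightarrow> int. z = (\<Sum>k<4. of_int (a k) * zeta5 ^ k)}"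

text \<open>The embedding sigma with sigma(zeta5) = zeta5^2, on O_K (coefficients w.r.t. the
  integral basis are unique, so this is well defined).\<close>
definition sigma5 :: "complex \<Rightarrow> complex" where
  "sigma5 z = (THE w. \<exists>a::nat \<Rightarrow> int. z = (\<Sum>k<4. of_int (a k) * zeta5 ^ k)
                    \<and> w = (\<Sum>k<4. of_int (a k) * (zeta5 ^ 2) ^ k))"

definition S5 :: "complex set" where
  "S5 = {z \<in> OK5. cmod (sigma5 z) \<le> 1}"

definition unit_OK5 :: "complex \<Rightarrow> bool" where
  "unit_OK5 u \<longleftrightarrow> u \<in> OK5 \<and> (\<exists>v \<in> OK5. u * v = 1)"

end

theory Submission
  imports Defs
begin

lemma z5_Im: "Im zeta5 > 0"
proof -
  have "Im zeta5 = sin (2*pi/5)" unfolding zeta5_def by (simp add: Im_exp)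
  also have "... > 0" by (rule sin_gt_zero) auto
  finally show ?thesis .
qed

lemma z5_pow5: "zeta5 ^ 5 = 1"
proof -
  have "zeta5 ^ 5 = exp (of_nat 5 * (2 * of_real pi * \<i> / 5))"
    unfolding zeta5_def by (rule exp_of_nat_mult[symmetric])
  also have "of_nat 5 * (2 * of_real pi * \<i> / 5) = 2 * of_real pi * (\<i>::complex)" by simp
  finally show ?thesis by simp
qed

lemma z5_sum: "1 + zeta5 + zeta5^2 + zeta5^3 + zeta5^4 = 0"
proof -
  have "zeta5 \<noteq> 1" using z5_Im by auto
  moreover have "(zeta5 - 1) * (1 + zeta5 + zeta5^2 + zeta5^3 + zeta5^4) = 0"
    using z5_pow5 by (simp add: algebra_simps eval_nat_numeral)
  ultimately show ?thesis by simp
qed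

lemma z5_norm: "cmod zeta5 = 1"
  unfolding zeta5_def by (simp add: norm_exp_eq_Re)

lemma z5_cnj: "cnj zeta5 = zeta5 ^ 4"
proof -
  have "zeta5 * cnj zeta5 = 1" using z5_norm complex_norm_square[of zeta5] by simp
  hence "zeta5^4 * (zeta5 * cnj zeta5) = zeta5^4" by simp
  hence "zeta5^5 * cnj zeta5 = zeta5^4" by (simp add: algebra_simps eval_nat_numeral)
  thus ?thesis using z5_pow5 by simp
qed

definition zs :: "(nat \<Rightarrow> int) \<Rightarrow> complex \<Rightarrow> complex" where
  "zs a w = (\<Sum>k<4. of_int (a k) * w ^ k)"

lemma sum4: "(\<Sum>k<4. f k) = f 0 + f 1 + f 2 + f (3::nat)"
  by (simp add: eval_nat_numeral)

lemma zs_exp: "zs a w = of_int (a 0) + of_int (a 1) * w + of_int (a 2) * w^2 + of_int (a 3) * w^3"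
  unfolding zs_def sum4 by simp

lemma int_desc: "(x::int)^2 = 5*y^2 \<Longrightarrow> x = 0"
proof (induction "nat \<bar>x\<bar>" arbitrary: x y rule: less_induct)
  case less
  show ?case
  proof (rule ccontr)
    assume x0: "x \<noteq> 0"
    have m: "x^2 mod 5 = 0" using less.prems by simp
    have "x mod 5 = 0"
    proof -
      have "x^2 mod 5 = ((x mod 5)^2) mod 5" by (simp add: power_mod)
      moreover have "x mod 5 \<in> {0,1,2,3,4}" by auto
      ultimately show ?thesis using m by auto
    qed
    then obtain m where xm: "x = 5*m" by auto
    hence "y^2 = 5*m^2" using less.prems by (simp add: power_mult_distrib)
    have "\<bar>y\<bar> < \<bar>x\<bar>"
    proof -
      have "x^2 > 0" using x0 by simp
      hence "y^2 > 0" using less.prems by simp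
      hence "y^2 < x^2" using less.prems by simp
      hence "\<bar>y\<bar>^2 < \<bar>x\<bar>^2" by simp
      thus ?thesis by (rule power_less_imp_less_base) simp
    qed
    hence "y = 0" using less.hyps[of y m] \<open>y^2 = 5*m^2\<close> by auto
    thus False using less.prems x0 by simp
  qed
qed

lemma int_quad: "(a::int)^2 - a*b - b^2 = 0 \<Longrightarrow> a = 0 \<and> b = 0"
proof -
  assume h: "a^2 - a*b - b^2 = 0"
  have "(2*a-b)^2 = 5*b^2" using h by algebra
  hence "2*a - b = 0" by (rule int_desc)
  hence "b = 2*a" by simp
  thus ?thesis using h by (simp add: power2_eq_square)
qed

lemma tau_irr:
  assumes t: "\<tau>^2 + \<tau> - 1 = (0::real)" and h: "of_int a + of_int b * \<tau> = 0"
  shows "a = 0 \<and> b = 0"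
proof -
  have ha: "of_int a = - of_int b * \<tau>" using h by simp
  have "(of_int (a^2 - a*b - b^2) :: real) = of_int b ^2 * (\<tau>^2 + \<tau> - 1)"
    by (simp add: ha power2_eq_square algebra_simps)
  hence "(of_int (a^2 - a*b - b^2) :: real) = 0" by (simp only: t mult_zero_right)
  hence "a^2 - a*b - b^2 = 0" by (simp only: of_int_eq_0_iff)
  thus ?thesis by (rule int_quad)
qed

lemma indep:
  assumes h: "zs c zeta5 = 0"
  shows "c 0 = 0 \<and> c 1 = 0 \<and> c 2 = 0 \<and> c 3 = 0"
proof -
  define \<tau> where "\<tau> = 2 * Re zeta5"
  have T: "of_real \<tau> = zeta5 + zeta5^4" unfolding \<tau>_def
    using complex_add_cnj[of zeta5] z5_cnj by simp
  have "(zeta5 + zeta5^4)^2 + (zeta5 + zeta5^4) - 1 = 0"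
    using z5_pow5 z5_sum by algebra
  hence "of_real (\<tau>^2 + \<tau> - 1) = (0::complex)" using T by simp
  hence t: "\<tau>^2 + \<tau> - 1 = 0" by (simp only: of_real_eq_0_iff)
  define X where "X = of_int (c 0) - of_int (c 2) - of_int (c 3) * \<tau>"
  define Y where "Y = of_int (c 1) + (of_int (c 2) - of_int (c 3)) * \<tau>"
  have "zs c zeta5 = of_real X + zeta5 * of_real Y"
  proof -
    have "zs c zeta5 = of_int (c 0) - of_int (c 2) - of_int (c 3) * of_real \<tau>
       + zeta5 * (of_int (c 1) + (of_int (c 2) - of_int (c 3)) * of_real \<tau>)"
      unfolding zs_exp T using z5_pow5 z5_sum by algebra
    thus ?thesis unfolding X_def Y_def by simp
  qed
  hence e: "of_real X + zeta5 * of_real Y = 0" using h by simp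
  hence "Im (of_real X + zeta5 * of_real Y) = 0" by simp
  hence "Im zeta5 * Y = 0" by simp
  hence Y0: "Y = 0" using z5_Im by simp
  hence X0: "X = 0" using e by simp
  have "c 1 = 0 \<and> c 2 - c 3 = 0" using tau_irr[OF t, of "c 1" "c 2 - c 3"] Y0 unfolding Y_def by simp
  moreover have "c 0 - c 2 = 0 \<and> - c 3 = 0" using tau_irr[OF t, of "c 0 - c 2" "- c 3"] X0 unfolding X_def by simp
  ultimately show ?thesis by simp
qed

lemma zs_diff: "zs (\<lambda>k. a k - b k) w = zs a w - zs b w"
  unfolding zs_exp by (simp add: algebra_simps)

lemma uniq: "zs a zeta5 = zs b zeta5 \<Longrightarrow> k < 4 \<Longrightarrow> a k = b k"
proof -
  assume "zs a zeta5 = zs b zeta5" "k < 4"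
  hence "zs (\<lambda>k. a k - b k) zeta5 = 0" by (simp add: zs_diff)
  from indep[OF this] have "a 0 = b 0" "a 1 = b 1" "a 2 = b 2" "a 3 = b 3" by auto
  moreover have "k = 0 \<or> k = 1 \<or> k = 2 \<or> k = 3" using \<open>k < 4\<close> by auto
  ultimately show "a k = b k" by auto
qed

lemma sigma_zs: "sigma5 (zs a zeta5) = zs a (zeta5^2)"
  unfolding sigma5_def
proof (rule the_equality)
  show "\<exists>a'. zs a zeta5 = (\<Sum>k<4. of_int (a' k) * zeta5 ^ k) \<and>
      zs a (zeta5^2) = (\<Sum>k<4. of_int (a' k) * (zeta5 ^ 2) ^ k)"
    by (rule exI[of _ a]) (simp add: zs_def)
next
  fix w assume "\<exists>a'. zs a zeta5 = (\<Sum>k<4. of_int (a' k) * zeta5 ^ k) \<and>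
      w = (\<Sum>k<4. of_int (a' k) * (zeta5 ^ 2) ^ k)"
  then obtain a' where h1: "zs a zeta5 = zs a' zeta5" and h2: "w = zs a' (zeta5^2)"
    unfolding zs_def by auto
  have "\<And>k. k \<in> {..<4} \<Longrightarrow> a' k = a k" using uniq[OF h1] by auto
  thus "w = zs a (zeta5^2)" unfolding h2 zs_def by (intro sum.cong) auto
qed

lemma mul4:
  assumes "(w::complex)^5 = 1" "1 + w + w^2 + w^3 + w^4 = 0"
  shows "(of_int p0 + of_int p1*w + of_int p2*w^2 + of_int p3*w^3) *
         (of_int q0 + of_int q1*w + of_int q2*w^2 + of_int q3*w^3) =
    of_int (p0*q0 - (p1*q3+p2*q2+p3*q1) + (p2*q3+p3*q2))
    + of_int ((p0*q1+p1*q0) - (p1*q3+p2*q2+p3*q1) + p3*q3) * w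
    + of_int ((p0*q2+p1*q1+p2*q0) - (p1*q3+p2*q2+p3*q1)) * w^2
    + of_int ((p0*q3+p1*q2+p2*q1+p3*q0) - (p1*q3+p2*q2+p3*q1)) * w^3"
  apply (simp only: of_int_add of_int_mult of_int_diff)
  using assms by algebra

theorem mainTheorem6:
  assumes "z1 \<in> S5" and "z2 \<in> S5" and "z1 \<noteq> z2"
    and "cmod (z1 - z2) < sqrt 5 / 2"
  shows "unit_OK5 (z1 - z2)"
proof -
  obtain a where a: "z1 = zs a zeta5" using assms(1) unfolding S5_def OK5_def zs_def by auto
  obtain b where b: "z2 = zs b zeta5" using assms(2) unfolding S5_def OK5_def zs_def by auto
  have s1: "cmod (zs a (zeta5^2)) \<le> 1" using assms(1) a sigma_zs unfolding S5_def by auto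
  have s2: "cmod (zs b (zeta5^2)) \<le> 1" using assms(2) b sigma_zs unfolding S5_def by auto
  define c where "c = (\<lambda>k. a k - b k)"
  define z where "z = z1 - z2"
  have zc: "z = zs c zeta5" using a b zs_diff c_def z_def by simp
  define sz where "sz = zs c (zeta5^2)"
  have "sz = zs a (zeta5^2) - zs b (zeta5^2)" unfolding sz_def c_def by (rule zs_diff)
  hence "cmod sz \<le> cmod (zs a (zeta5^2)) + cmod (zs b (zeta5^2))"
    using norm_triangle_ineq4 by simp
  hence szb: "cmod sz \<le> 2" using s1 s2 by simp
  have z0: "z \<noteq> 0" using assms(3) z_def by simp
  define S where "S = c 0^2 + c 1^2 + c 2^2 + c 3^2"
  define A where "A = c 0 * c 1 + c 1 * c 2 + c 2 * c 3"
  define B where "B = c 0 * c 2 + c 1 * c 3 + c 0 * c 3"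
  define t where "t = zeta5 + zeta5^4"
  define u where "u = zeta5^2 + zeta5^3"
  have tu1: "t + u = -1" unfolding t_def u_def using z5_sum by algebra
  have tu2: "t * u = -1" unfolding t_def u_def using z5_sum z5_pow5 by algebra
  have hz: "z * cnj z = of_int S + of_int A * t + of_int B * u"
    unfolding zc zs_exp S_def A_def B_def t_def u_def
    apply (simp only: complex_cnj_add complex_cnj_mult complex_cnj_of_int complex_cnj_power z5_cnj
       of_int_add of_int_mult of_int_power)
    using z5_pow5 z5_sum by algebra
  have hs: "sz * cnj sz = of_int S + of_int A * u + of_int B * t"
    unfolding sz_def zs_exp S_def A_def B_def t_def u_def
    apply (simp only: complex_cnj_add complex_cnj_mult complex_cnj_of_int complex_cnj_power z5_cnj
       of_int_add of_int_mult of_int_power)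
    using z5_pow5 z5_sum by algebra
  define N where "N = S^2 - S*(A+B) - A^2 - B^2 + 3*A*B"
  have "of_real (cmod z^2 * cmod sz^2) = (z * cnj z) * (sz * cnj sz)"
    by (simp only: of_real_mult complex_norm_square)
  also have "... = of_int N" unfolding hz hs N_def
    apply (simp only: of_int_add of_int_mult of_int_power of_int_diff of_int_numeral)
    using tu1 tu2 by algebra
  finally have hNc: "of_real (cmod z^2 * cmod sz^2) = (of_real (of_int N) :: complex)" by simp
  hence hN: "cmod z^2 * cmod sz^2 = of_int N" by (simp only: of_real_eq_iff)
  have "cmod z ^2 < (sqrt 5 / 2)^2" using assms(4) z_def by (intro power_strict_mono) auto
  hence zb: "cmod z^2 < 5/4" by (simp add: power_divide)
  have "cmod sz^2 \<le> 2^2" using szb by (intro power_mono) auto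
  hence "cmod z^2 * cmod sz^2 \<le> cmod z^2 * 4" by (intro mult_left_mono) auto
  hence "(of_int N :: real) < 5" using hN zb by simp
  hence N5: "N < 5" by simp
  have "(of_int N :: real) \<ge> 0" using hN[symmetric] by simp
  hence N0: "N \<ge> 0" by simp
  have Nne: "N \<noteq> 0"
  proof
    assume "N = 0"
    hence "(S - B)^2 - (S - B)*(A - B) - (A - B)^2 = 0" unfolding N_def by algebra
    from int_quad[OF this] have "S = B" "A = B" by auto
    hence "z * cnj z = of_int S + of_int S * (t + u)" using hz by (simp add: algebra_simps)
    hence "z * cnj z = 0" using tu1 by simp
    thus False using z0 by simp
  qed
  define s where "s = c 0 + c 1 + c 2 + c 3"
  define R where "R = (-1 * c 2 * c 3 ^ 3 + -1 * c 2 ^ 2 * c 3 ^ 2 + -1 * c 2 ^ 3 * c 3 + -1 * c 1 * c 3 ^ 3 + -2 * c 1 * c 2 * c 3 ^ 2 + -3 * c 1 * c 2 ^ 2 * c 3 + -1 * c 1 * c 2 ^ 3 + -1 * c 1 ^ 2 * c 3 ^ 2 + -2 * c 1 ^ 2 * c 2 * c 3 + -1 * c 1 ^ 2 * c 2 ^ 2 + -1 * c 1 ^ 3 * c 3 + -1 * c 1 ^ 3 * c 2 + -1 * c 0 * c 3 ^ 3 + -2 * c 0 * c 2 * c 3 ^ 2 + -2 * c 0 * c 2 ^ 2 * c 3 + -1 * c 0 * c 2 ^ 3 + -3 * c 0 * c 1 * c 3 ^ 2 + -5 * c 0 * c 1 * c 2 * c 3 + -2 * c 0 * c 1 * c 2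 ^ 2 + -2 * c 0 * c 1 ^ 2 * c 3 + -3 * c 0 * c 1 ^ 2 * c 2 + -1 * c 0 * c 1 ^ 3 + -1 * c 0 ^ 2 * c 3 ^ 2 + -3 * c 0 ^ 2 * c 2 * c 3 + -1 * c 0 ^ 2 * c 2 ^ 2 + -2 * c 0 ^ 2 * c 1 * c 3 + -2 * c 0 ^ 2 * c 1 * c 2 + -1 * c 0 ^ 2 * c 1 ^ 2 + -1 * c 0 ^ 3 * c 3 + -1 * c 0 ^ 3 * c 2 + -1 * c 0 ^ 3 * c 1)"
  have NR: "N = s^4 + 5 * R"
    unfolding N_def S_def A_def B_def s_def R_def by algebra
  have "N mod 5 = s^4 mod 5" unfolding NR by simp
  also have "s^4 mod 5 = (s mod 5)^4 mod 5" by (simp add: power_mod)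
  also have "(s mod 5)^4 mod 5 \<in> {0, 1}"
  proof -
    have "s mod 5 \<in> {0,1,2,3,4}" by auto
    thus ?thesis by auto
  qed
  finally have "N mod 5 \<in> {0,1}" .
  hence N1: "N = 1" using N5 N0 Nne by auto
  define p0 where "p0 = c 0 - c 1"
  define p1 where "p1 = - c 1"
  define p2 where "p2 = c 3 - c 1"
  define p3 where "p3 = c 2 - c 1"
  define q0 where "q0 = S - B"
  define q1 where "q1 = (0::int)"
  define q2 where "q2 = A - B"
  define q3 where "q3 = A - B"
  have cz: "cnj z = of_int p0 + of_int p1 * zeta5 + of_int p2 * zeta5^2 + of_int p3 * zeta5^3"
    unfolding zc zs_exp p0_def p1_def p2_def p3_def
    apply (simp only: complex_cnj_add complex_cnj_mult complex_cnj_of_int complex_cnj_power z5_cnj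
       of_int_diff of_int_minus)
    using z5_pow5 z5_sum by algebra
  have fq: "of_int S + of_int A * u + of_int B * t = of_int q0 + of_int q1 * zeta5 + of_int q2 * zeta5^2 + of_int q3 * zeta5^3"
    unfolding t_def u_def q0_def q1_def q2_def q3_def
    apply (simp only: of_int_diff of_int_0)
    using z5_sum by algebra
  define d0 where "d0 = p0*q0 - (p1*q3+p2*q2+p3*q1) + (p2*q3+p3*q2)"
  define d1 where "d1 = (p0*q1+p1*q0) - (p1*q3+p2*q2+p3*q1) + p3*q3"
  define d2 where "d2 = (p0*q2+p1*q1+p2*q0) - (p1*q3+p2*q2+p3*q1)"
  define d3 where "d3 = (p0*q3+p1*q2+p2*q1+p3*q0) - (p1*q3+p2*q2+p3*q1)"
  define d where "d = (\<lambda>k::nat. if k = 0 then d0 else if k = 1 then d1 else if k = 2 then d2 else d3)"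
  have dexp: "zs d zeta5 = of_int d0 + of_int d1 * zeta5 + of_int d2 * zeta5^2 + of_int d3 * zeta5^3"
    unfolding zs_exp d_def by simp
  have dv: "zs d zeta5 = cnj z * (of_int S + of_int A * u + of_int B * t)"
    unfolding dexp cz fq d0_def d1_def d2_def d3_def
    by (rule mul4[OF z5_pow5 z5_sum, symmetric])
  have "z * zs d zeta5 = (z * cnj z) * (sz * cnj sz)" unfolding dv hs by (simp add: algebra_simps)
  also have "... = 1" using hNc \<open>of_real (cmod z^2 * cmod sz^2) = (z * cnj z) * (sz * cnj sz)\<close> N1 by simp
  finally have "z * zs d zeta5 = 1" .
  moreover have "z \<in> OK5" unfolding zc OK5_def zs_def by blast
  moreover have "zs d zeta5 \<in> OK5" unfolding OK5_def zs_def by blast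
  ultimately show ?thesis unfolding unit_OK5_def z_def by blast
qed

end
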